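(* Let $q$ be odd and $c\in{\mathbb F}_q$. Then $$\prod\{c-a: a\in\mathcal B_2^{--}\}=\begin{cases}2&c=2,\\ \left(\frac2q\right)2 & c=-2,\\ \sqrt{c+2}& c\in\mathcal B_2^{-+},\\ -\left(\frac2q\right)\sqrt{2-c}& c\in\mathcal B_2^{+-},\\ 2 & c\in\mathcal B_2^{++}\text{ and }\sqrt{c+2}\in\mathcal B_2^{++},\\ -2& c\in\mathcal B_2^{++}\text{ and }\sqrt{c+2}\notin\mathcal B_2^{++},\\ 0& c\in\mathcal B_2^{--},\end{cases}$$ where in the third case $\sqrt{c+2}$ is chosen so that $\sqrt{c+2}+2$ is a square, and in the fourth case $\sqrt{2-c}$ is chosen so that $\sqrt{2-c}+2$ is a nonsquare. Moreover, if $c\in\mathcal B_2^{++}$ then the two square roots $\pm\sqrt{c+2}$ either both lie in $\mathcal B_2^{++}$ or both lie in $\mathcal B_2^{--}$.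
   Context: $\left(\frac{a}{q}\right)$ is the Legendre symbol on ${\mathbb F}_q$. For $\varepsilon_1,\varepsilon_2\in\{1,-1\}$ (written $+,-$), $\mathcal B_2^{\varepsilon_1,\varepsilon_2}=\{b\in{\mathbb F}_q:\left(\frac{2-b}{q}\right)=\varepsilon_1,\ \left(\frac{2+b}{q}\right)=\varepsilon_2\}$. Note ${\mathbb F}_q=\{2,-2\}\sqcup\bigsqcup_{\varepsilon_1,\varepsilon_2}\mathcal B_2^{\varepsilon_1,\varepsilon_2}$. *)

theory Defs
  imports Main
begin

definition legendreF :: "'a::{field,finite} \<Rightarrow> int" where
  "legendreF a = (if a = 0 then 0 else if (\<exists>y. y ^ 2 = a) then 1 else -1)"

definition B2 :: "int \<Rightarrow> int \<Rightarrow> 'a::{field,finite} set" where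
  "B2 e1 e2 = {b. legendreF (2 - b) = e1 \<and> legendreF (2 + b) = e2}"

end

theory Submission imports Defs "HOL-Computational_Algebra.Polynomial_Factorial" "HOL-Library.Cardinality" begin

lemma ff_pow_card_minus1:
  fixes x :: "'a::{field,finite}"
  assumes "x \<noteq> 0"
  shows "x ^ (CARD('a) - 1) = 1"
proof -
  have fin: "finite (UNIV - {0::'a})" by simp
  have "(\<Prod>y\<in>UNIV-{0::'a}. x * y) = (\<Prod>y\<in>UNIV-{0::'a}. y)"
  proof (rule prod.reindex_bij_witness[where i="\<lambda>y. y / x" and j="\<lambda>y. x * y"])
  qed (use assms in \<open>auto simp: field_simps\<close>)
  moreover have "(\<Prod>y\<in>UNIV-{0::'a}. x * y) = x ^ card (UNIV - {0::'a}) * (\<Prod>y\<in>UNIV-{0::'a}. y)"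
    by (simp add: prod.distrib)
  moreover have "(\<Prod>y\<in>UNIV-{0::'a}. y) \<noteq> 0" by (simp add: prod_zero_iff)
  moreover have "card (UNIV - {0::'a}) = CARD('a) - 1" by (simp add: card_Diff_singleton)
  ultimately show ?thesis by (metis mult_cancel_right2)
qed

lemma ff_pow_card:
  fixes x :: "'a::{field,finite}"
  shows "x ^ CARD('a) = x"
proof (cases "x = 0")
  case True thus ?thesis by simp
next
  case False
  have "CARD('a) = Suc (CARD('a) - 1)" using finite_UNIV_card_ge_0[where 'a='a] by simp
  hence "x ^ CARD('a) = x * x ^ (CARD('a) - 1)" by (metis power_Suc)
  thus ?thesis using ff_pow_card_minus1[OF False] by simp
qed

lemma ff_card_ge2: "CARD('a::{field,finite}) \<ge> 2"
proof -
  have "{0::'a, 1} \<subseteq> UNIV" by simp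
  hence "card {0::'a,1} \<le> CARD('a)" by (rule card_mono[OF finite_class.finite_UNIV])
  thus ?thesis by simp
qed

lemma ff_choose_zero:
  assumes "0 < j" "j < CARD('a::{field,finite})"
  shows "of_nat (CARD('a) choose j) = (0::'a)"
proof -
  define q where "q = CARD('a)"
  define R :: "'a poly" where "R = [:1,1:]^q - monom 1 q - 1"
  have q2: "q \<ge> 2" unfolding q_def by (rule ff_card_ge2)
  have c1: "coeff ([:1,1:]^q) i = (if i \<le> q then of_nat (q choose i) else (0::'a))" for i
  proof (cases "i \<le> q")
    case True thus ?thesis using coeff_linear_poly_power[OF True, of "1::'a" 1] by simp
  next
    case False thus ?thesis by (simp add: coeff_eq_0 degree_linear_power)
  qed
  have cR: "coeff R i = (if i \<le> q then of_nat (q choose i) else 0) - (if i = q then 1 else 0) - (if i = 0 then 1 else 0)" for i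
    unfolding R_def by (simp add: c1 coeff_1)
  have "R = 0"
  proof (rule poly_eqI_degree[where A=UNIV])
    show "poly R x = poly 0 x" for x
      unfolding R_def q_def by (simp add: ff_pow_card add.commute poly_monom)
    have "degree R < q"
      by (rule degree_lessI) (use q2 cR in auto)
    thus "degree R < card (UNIV::'a set)" by (simp add: q_def)
    show "degree (0::'a poly) < card (UNIV::'a set)" using q2 q_def by simp
  qed
  hence "coeff R j = 0" by simp
  thus ?thesis using assms cR[of j] by (simp add: q_def)
qed

lemma ff_char: "of_nat CARD('a::{field,finite}) = (0::'a)"
  using ff_choose_zero[of 1, where 'a='a] ff_card_ge2[where 'a='a] by simp

lemma ff_two_nz:
  assumes "odd CARD('a::{field,finite})"
  shows "(2::'a) \<noteq> 0"
proof
  assume h: "(2::'a) = 0"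
  obtain r where r: "CARD('a) = 2 * r + 1" using assms oddE by blast
  have "(of_nat CARD('a)::'a) = 2 * of_nat r + 1" by (simp add: r)
  also have "\<dots> = 1" using h by simp
  finally show False using ff_char[where 'a='a] by simp
qed

lemma sq_fiber:
  assumes "odd CARD('a::{field,finite})" "(z::'a) \<noteq> 0"
  shows "card {y. y^2 = z^2} = 2"
proof -
  have "{y. y^2 = z^2} = {z, -z}"
    by (auto simp: power2_eq_iff)
  moreover have "z \<noteq> -z"
  proof
    assume "z = -z"
    hence "2 * z = 0" by (metis mult_2 add_eq_0_iff)
    thus False using assms ff_two_nz[OF assms(1)] by simp
  qed
  ultimately show ?thesis by simp
qed

lemma sq_count:
  assumes "odd CARD('a::{field,finite})"
  shows "card {s::'a. s \<noteq> 0 \<and> (\<exists>y. y^2 = s)} = (CARD('a) - 1) div 2"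
proof -
  define S where "S = {s::'a. s \<noteq> 0 \<and> (\<exists>y. y^2 = s)}"
  have U: "UNIV - {0::'a} = (\<Union>s\<in>S. {y. y^2 = s})"
    unfolding S_def by auto
  have "card (UNIV - {0::'a}) = (\<Sum>s\<in>S. card {y. y^2 = s})"
    unfolding U by (rule card_UN_disjoint) auto
  also have "\<dots> = (\<Sum>s\<in>S. 2)"
  proof (rule sum.cong)
    fix s assume "s \<in> S"
    then obtain z where z: "z \<noteq> 0" "s = z^2" unfolding S_def by auto
    show "card {y. y^2 = s} = 2" using sq_fiber[OF assms z(1)] z by simp
  qed simp
  finally have "CARD('a) - 1 = 2 * card S" by (simp add: card_Diff_singleton)
  thus ?thesis unfolding S_def by simp
qed

lemma euler_pm:
  assumes "odd CARD('a::{field,finite})" "(x::'a) \<noteq> 0"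
  shows "x ^ ((CARD('a) - 1) div 2) = 1 \<or> x ^ ((CARD('a) - 1) div 2) = -1"
proof -
  define m where "m = (CARD('a) - 1) div 2"
  have "2 * m = CARD('a) - 1" using assms(1) unfolding m_def by simp
  hence "(x^m)^2 = 1" using ff_pow_card_minus1[OF assms(2)] by (simp add: power_mult[symmetric] mult.commute)
  thus ?thesis unfolding m_def[symmetric] using power2_eq_1_iff by blast
qed

lemma euler_sq:
  assumes "odd CARD('a::{field,finite})" "(x::'a) \<noteq> 0"
  shows "(\<exists>y. y^2 = x) \<longleftrightarrow> x ^ ((CARD('a) - 1) div 2) = 1"
proof -
  define m where "m = (CARD('a) - 1) div 2"
  have q2: "CARD('a) \<ge> 3" using ff_card_ge2[where 'a='a] assms(1) by (cases "CARD('a) = 2") auto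
  hence m1: "m \<ge> 1" unfolding m_def by auto
  have 2: "2 * m = CARD('a) - 1" using assms(1) unfolding m_def by simp
  define S where "S = {s::'a. s \<noteq> 0 \<and> (\<exists>y. y^2 = s)}"
  have cS: "card S = m" unfolding S_def m_def by (rule sq_count[OF assms(1)])
  have sub: "S \<subseteq> {x. poly (monom 1 m - 1 :: 'a poly) x = 0}"
  proof
    fix s assume "s \<in> S"
    then obtain y where y: "y \<noteq> 0" "s = y^2" unfolding S_def by auto
    have "s^m = y^(2*m)" by (simp add: y power_mult)
    also have "\<dots> = 1" using 2 ff_pow_card_minus1[OF y(1)] by simp
    finally show "s \<in> {x. poly (monom 1 m - 1 :: 'a poly) x = 0}" by (simp add: poly_monom)
  qed
  have nz: "(monom 1 m - 1 :: 'a poly) \<noteq> 0"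
  proof
    assume "(monom 1 m - 1 :: 'a poly) = 0"
    hence "coeff (monom 1 m - 1 :: 'a poly) m = 0" by simp
    thus False using m1 by (simp add: coeff_1)
  qed
  have deg: "degree (monom 1 m - 1 :: 'a poly) = m"
  proof (rule order.antisym)
    show "degree (monom 1 m - 1 :: 'a poly) \<le> m" by (rule degree_le) (auto simp: coeff_1)
    show "m \<le> degree (monom 1 m - 1 :: 'a poly)" by (rule le_degree) (use m1 in \<open>simp add: coeff_1\<close>)
  qed
  have fin: "finite {x. poly (monom 1 m - 1 :: 'a poly) x = 0}" by simp
  have "card {x. poly (monom 1 m - 1 :: 'a poly) x = 0} \<le> m"
    using card_poly_roots_bound[OF nz] deg by simp
  hence eq: "S = {x. poly (monom 1 m - 1 :: 'a poly) x = 0}"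
    using card_subset_eq[OF fin sub] cS card_mono[OF fin sub] by simp
  show ?thesis
  proof
    assume "\<exists>y. y^2 = x"
    hence "x \<in> S" using assms(2) unfolding S_def by auto
    thus "x ^ ((CARD('a) - 1) div 2) = 1" using sub by (auto simp add: poly_monom m_def)
  next
    assume "x ^ ((CARD('a) - 1) div 2) = 1"
    hence "x \<in> {x. poly (monom 1 m - 1 :: 'a poly) x = 0}" by (simp add: poly_monom m_def)
    thus "\<exists>y. y^2 = x" using eq unfolding S_def by auto
  qed
qed

lemma ff_m_ge1:
  assumes "odd CARD('a::{field,finite})"
  shows "(CARD('a) - 1) div 2 \<ge> 1"
proof -
  have "CARD('a) \<ge> 3" using ff_card_ge2[where 'a='a] assms by (cases "CARD('a) = 2") auto
  thus ?thesis by auto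
qed

lemma one_neq_minus_one:
  assumes "odd CARD('a::{field,finite})"
  shows "(1::'a) \<noteq> -1"
proof
  assume "(1::'a) = -1"
  hence "(2::'a) = 0" by (metis one_add_one add.right_inverse)
  thus False using ff_two_nz[OF assms] by simp
qed

lemma leg_pow:
  assumes "odd CARD('a::{field,finite})"
  shows "of_int (legendreF (x::'a)) = x ^ ((CARD('a) - 1) div 2)"
proof -
  have m1: "(CARD('a) - 1) div 2 \<noteq> 0" using ff_m_ge1[OF assms] by simp
  show ?thesis
  proof (cases "x = 0")
    case True thus ?thesis using m1 by (simp add: legendreF_def)
  next
    case False
    thus ?thesis using euler_sq[OF assms False] euler_pm[OF assms False]
      by (auto simp: legendreF_def)
  qed
qed

lemma leg_cases:
  assumes "odd CARD('a::{field,finite})"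
  shows "legendreF (x::'a) = 0 \<or> legendreF x = 1 \<or> legendreF x = -1"
  by (auto simp: legendreF_def)

lemma leg_eq_iff:
  assumes "odd CARD('a::{field,finite})"
  shows "legendreF (x::'a) = e \<longleftrightarrow> (e = 0 \<or> e = 1 \<or> e = -1) \<and> x ^ ((CARD('a) - 1) div 2) = of_int e"
proof -
  have n: "(1::'a) \<noteq> -1" "(1::'a) \<noteq> 0" "(-1::'a) \<noteq> 0" using one_neq_minus_one[OF assms] by auto
  have "legendreF x = 0 \<or> legendreF x = 1 \<or> legendreF x = -1" by (rule leg_cases[OF assms])
  moreover have "of_int (legendreF x) = x ^ ((CARD('a) - 1) div 2)" by (rule leg_pow[OF assms])
  ultimately show ?thesis using n by (auto simp flip: eq_neg_iff_add_eq_0)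
qed

lemma prod_lin_dvd:
  fixes p :: "'a::field poly"
  assumes "finite S" "\<forall>u\<in>S. poly p u = 0"
  shows "(\<Prod>u\<in>S. [:-u,1:]) dvd p"
  using assms
proof (induction S arbitrary: p rule: finite_induct)
  case empty thus ?case by simp
next
  case (insert u S)
  have "[:-u,1:] dvd p" using insert.prems by (simp add: poly_eq_0_iff_dvd)
  then obtain r where r: "p = [:-u,1:] * r" by (auto simp: dvd_def)
  have "\<forall>v\<in>S. poly r v = 0"
  proof
    fix v assume v: "v \<in> S"
    hence "poly p v = 0" using insert.prems by simp
    hence "(v - u) * poly r v = 0" by (auto simp: r algebra_simps)
    moreover have "v \<noteq> u" using v insert.hyps by auto
    ultimately show "poly r v = 0" by auto
  qed
  hence "(\<Prod>u\<in>S. [:-u,1:]) dvd r" by (rule insert.IH)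
  hence "[:-u,1:] * (\<Prod>u\<in>S. [:-u,1:]) dvd p" unfolding r by (rule mult_dvd_mono[OF dvd_refl])
  moreover have "(\<Prod>u\<in>insert u S. [:-u,1:]) = [:-u,1:] * (\<Prod>u\<in>S. [:-u,1:])"
    using insert.hyps by (rule prod.insert)
  ultimately show ?case by simp
qed

lemma pcompose_dvd:
  fixes p :: "'a::comm_ring_1 poly"
  assumes "p dvd r"
  shows "pcompose p s dvd pcompose r s"
proof -
  obtain t where "r = p * t" using assms by (auto simp: dvd_def)
  thus ?thesis by (simp add: pcompose_mult)
qed

lemma pcompose_power_left':
  fixes p :: "'a::comm_ring_1 poly"
  shows "pcompose (p ^ n) s = (pcompose p s) ^ n"
  by (induction n) (simp_all add: pcompose_mult pcompose_1)

lemma coprime_lin: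
  fixes p :: "'a::field poly"
  assumes "poly p c \<noteq> 0"
  shows "coprime p [:-c,1:]"
proof (rule coprimeI)
  fix d assume d: "d dvd p" "d dvd [:-c,1:]"
  have "d dvd p - [:-c, 1:] * synthetic_div p c" by (intro dvd_diff d(1) dvd_mult2 d(2))
  hence "d dvd [:poly p c:]" using synthetic_div_correct'[of c p] by (metis add_diff_cancel_left')
  moreover have "is_unit [:poly p c:]" using assms by (auto simp add: is_unit_poly_iff dvd_field_iff)
  ultimately show "is_unit d" using dvd_unit_imp_unit by blast
qed

lemma frob_lin:
  fixes a b :: "'a::{field,finite}"
  shows "[:a,b:] ^ CARD('a) = [:a:] + monom b CARD('a)"
proof -
  define q where "q = CARD('a)"
  have q2: "q \<ge> 2" unfolding q_def by (rule ff_card_ge2)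
  have "coeff ([:a,b:] ^ q) i = coeff ([:a:] + monom b q) i" for i
  proof (cases "i \<le> q")
    case True
    have "coeff ([:a,b:] ^ q) i = of_nat (q choose i) * b ^ i * a ^ (q - i)"
      by (rule coeff_linear_poly_power[OF True])
    also have "\<dots> = coeff ([:a:] + monom b q) i"
    proof -
      consider "i = 0" | "i = q" | "0 < i \<and> i < q" using True by linarith
      thus ?thesis
      proof cases
        case 1 thus ?thesis using q2 by (simp add: q_def ff_pow_card)
      next
        case 2 thus ?thesis using q2 by (simp add: q_def ff_pow_card coeff_pCons split: nat.split)
      next
        case 3 thus ?thesis using ff_choose_zero[of i, where 'a='a] by (simp add: q_def coeff_pCons split: nat.split)
      qed
    qed
    finally show ?thesis .
  next
    case False
    have "degree ([:a,b:] ^ q) \<le> q"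
      by (rule order.trans[OF degree_power_le]) (simp add: degree_pCons_le)
    thus ?thesis using False q2 by (simp add: coeff_eq_0 coeff_pCons split: nat.split)
  qed
  hence "[:a,b:] ^ q = [:a:] + monom b q" by (rule poly_eqI)
  thus ?thesis by (simp add: q_def)
qed

lemma N_card:
  assumes "odd CARD('a::{field,finite})"
  shows "card {u::'a. u ^ ((CARD('a) - 1) div 2) = -1} = (CARD('a) - 1) div 2"
proof -
  define m where "m = (CARD('a) - 1) div 2"
  define S1 where "S1 = {x::'a. x \<noteq> 0 \<and> x ^ m = 1}"
  define N where "N = {u::'a. u ^ m = -1}"
  have m1: "m \<ge> 1" unfolding m_def by (rule ff_m_ge1[OF assms])
  have "S1 = {s::'a. s \<noteq> 0 \<and> (\<exists>y. y^2 = s)}"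
    unfolding S1_def m_def using euler_sq[OF assms] by blast
  hence cS1: "card S1 = m" using sq_count[OF assms] unfolding m_def by simp
  have pm: "x \<noteq> 0 \<Longrightarrow> x ^ m = 1 \<or> x ^ m = -1" for x :: 'a
    unfolding m_def by (rule euler_pm[OF assms])
  have n1: "(1::'a) \<noteq> -1" by (rule one_neq_minus_one[OF assms])
  have U: "UNIV = insert 0 (S1 \<union> N)" unfolding S1_def N_def using pm by auto
  have "0 \<notin> S1 \<union> N" using m1 unfolding S1_def N_def by (auto simp: power_0_left)
  moreover have "S1 \<inter> N = {}" using n1 unfolding S1_def N_def by auto
  ultimately have "CARD('a) = Suc (card S1 + card N)"
    unfolding U by (simp add: card_Un_disjoint)
  moreover obtain r where "CARD('a) = 2*r+1" using assms oddE by blast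
  ultimately have "card N = m" using cS1 unfolding m_def by simp
  thus ?thesis unfolding N_def m_def .
qed

lemma P_N:
  assumes "odd CARD('a::{field,finite})"
  shows "(\<Prod>u\<in>{u::'a. u ^ ((CARD('a) - 1) div 2) = -1}. [:-u,1:]) = monom 1 ((CARD('a) - 1) div 2) + 1"
proof -
  define m where "m = (CARD('a) - 1) div 2"
  define N where "N = {u::'a. u ^ m = -1}"
  have m1: "m \<ge> 1" unfolding m_def by (rule ff_m_ge1[OF assms])
  have cN: "card N = m" unfolding N_def m_def by (rule N_card[OF assms])
  define P where "P = (\<Prod>u\<in>N. [:-u,1:])"
  have degP: "degree P = m"
    unfolding P_def by (subst degree_prod_eq_sum_degree) (auto simp: cN)
  have lcP: "lead_coeff P = 1" unfolding P_def by (simp add: lead_coeff_prod)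
  have degR: "degree (monom 1 m + 1 :: 'a poly) \<le> m"
    by (rule degree_le) (use m1 in \<open>auto simp: coeff_1\<close>)
  have "P = monom 1 m + 1"
  proof (rule poly_eqI_degree_lead_coeff[where n=m and A=N])
    show "coeff P m = coeff (monom 1 m + 1) m" using lcP degP m1 by (simp add: coeff_1)
    show "m \<le> card N" using cN by simp
    show "degree P \<le> m" using degP by simp
    show "degree (monom 1 m + 1 :: 'a poly) \<le> m" by (rule degR)
    fix z assume "z \<in> N"
    thus "poly P z = poly (monom 1 m + 1) z"
      unfolding P_def N_def by (auto simp: poly_prod poly_monom)
  qed
  thus ?thesis unfolding P_def N_def m_def .
qed

lemma lcA2:
  assumes q: "odd CARD('a::{field,finite})"
  shows "lead_coeff ([:2,1:]^((CARD('a) - 1) div 2 + 1) + [:2,-1:]^((CARD('a) - 1) div 2 + 1) :: 'a poly) = 2"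
proof -
  define k where "k = (CARD('a) - 1) div 2 + 1"
  define A2 :: "'a poly" where "A2 = [:2,1:]^k + [:2,-1:]^k"
  obtain r where r: "CARD('a) = 2*r+1" using q oddE by blast
  have k2: "2 * k = CARD('a) + 1" unfolding k_def using r by simp
  have kq: "2 * (of_nat k :: 'a) = 1"
  proof -
    have "2 * (of_nat k :: 'a) = of_nat (2*k)" by simp
    also have "\<dots> = of_nat CARD('a) + 1" by (simp only: k2 of_nat_add of_nat_1)
    finally show ?thesis using ff_char[where 'a='a] by simp
  qed
  have cA: "coeff A2 i = (if i \<le> k then of_nat (k choose i) * 2^(k-i) * (1 + (-1)^i) else 0)" for i
  proof (cases "i \<le> k")
    case True
    thus ?thesis unfolding A2_def
      by (simp add: coeff_linear_poly_power[OF True] algebra_simps)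
  next
    case False
    have "degree ([:2,1:]^k :: 'a poly) \<le> k" "degree ([:2,-1:]^k :: 'a poly) \<le> k"
      by (rule order.trans[OF degree_power_le], simp add: degree_pCons_le)+
    thus ?thesis using False unfolding A2_def by (simp add: coeff_eq_0)
  qed
  define d where "d = (if even k then k else k - 1)"
  have k1: "k \<ge> 1" unfolding k_def by simp
  have cd: "coeff A2 d = 2"
  proof (cases "even k")
    case True thus ?thesis unfolding d_def by (simp add: cA)
  next
    case False
    hence "odd (k - 1) = False" using k1 by simp
    have "even (k-1)" using False k1 by simp
    have kc: "k choose (k - Suc 0) = k"
      using binomial_symmetric[of "k-1" k] k1 by simp
    have "coeff A2 d = of_nat k * 2 * 2" unfolding d_def using False k1 \<open>even (k-1)\<close>
      by (simp add: cA kc)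
    also have "\<dots> = 2 * (2 * of_nat k)" by (simp add: algebra_simps)
    finally show ?thesis using kq by simp
  qed
  have hi: "coeff A2 i = 0" if "i > d" for i
  proof (cases "i \<le> k")
    case True
    hence "i = k" "odd k" using that unfolding d_def by (auto split: if_splits)
    thus ?thesis by (simp add: cA)
  next
    case False thus ?thesis by (simp add: cA)
  qed
  have "degree A2 = d"
  proof (rule order.antisym)
    show "degree A2 \<le> d" by (rule degree_le) (use hi in auto)
    show "d \<le> degree A2" by (rule le_degree) (simp add: cd ff_two_nz[OF q])
  qed
  thus ?thesis using cd unfolding A2_def k_def by simp
qed

definition bez :: "'b::comm_ring_1 \<Rightarrow> 'b \<Rightarrow> bool" where
  "bez a c \<longleftrightarrow> (\<exists>x y. x*a + y*c = 1)"

lemma bez_dvd: "bez a c \<Longrightarrow> a dvd b * c \<Longrightarrow> a dvd b"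
proof -
  assume "bez a c" "a dvd b * c"
  then obtain x y t where xy: "x*a + y*c = 1" and t: "b*c = a*t" unfolding bez_def dvd_def by blast
  have "b = b*(x*a + y*c)" by (simp add: xy)
  also have "\<dots> = a*(b*x) + y*(b*c)" by (simp add: algebra_simps)
  also have "\<dots> = a*(b*x + y*t)" unfolding t by (simp add: algebra_simps)
  finally show ?thesis by (rule dvdI)
qed

lemma bez_mult: "bez a c \<Longrightarrow> bez a d \<Longrightarrow> bez a (c * d)"
proof -
  assume "bez a c" "bez a d"
  then obtain x1 y1 x2 y2 where 1: "x1*a + y1*c = 1" and 2: "x2*a + y2*d = 1" unfolding bez_def by blast
  have "(x1*a + y1*c) * (x2*a + y2*d) = 1" by (simp add: 1 2)
  hence "(x1*x2*a + x1*y2*d + y1*c*x2) * a + (y1*y2) * (c*d) = 1" by (simp add: algebra_simps)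
  thus ?thesis unfolding bez_def by blast
qed

lemma bez_divisors: "bez a c \<Longrightarrow> a' dvd a \<Longrightarrow> c' dvd c \<Longrightarrow> bez a' c'"
proof -
  assume "bez a c" "a' dvd a" "c' dvd c"
  then obtain x y s t where xy: "x*a + y*c = 1" and s: "a = a'*s" and t: "c = c'*t" unfolding bez_def dvd_def by blast
  have "(x*s)*a' + (y*t)*c' = 1" using xy by (simp add: s t algebra_simps)
  thus ?thesis unfolding bez_def by blast
qed

lemma bez_sym: "bez a c \<Longrightarrow> bez c a"
proof -
  assume "bez a c"
  then obtain x y where "x*a + y*c = 1" unfolding bez_def by blast
  hence "y*c + x*a = 1" by (simp add: add.commute)
  thus ?thesis unfolding bez_def by blast
qed

lemma bez_neg: "bez a c \<Longrightarrow> bez a (-c)"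
proof -
  assume "bez a c"
  then obtain x y where "x*a + y*c = 1" unfolding bez_def by blast
  hence "x*a + (-y)*(-c) = 1" by simp
  thus ?thesis unfolding bez_def by blast
qed

lemma aux_ring: "(x::'b::comm_ring_1)*p + (-(x*s))*l = x*(p - l*s)"
  by (simp add: algebra_simps)

lemma bez_lin:
  fixes p :: "'a::field poly"
  assumes "poly p c \<noteq> 0"
  shows "bez p [:-c,1:]"
proof -
  have e: "[:-c, 1:] * synthetic_div p c + [:poly p c:] = p" by (rule synthetic_div_correct')
  have "[:inverse (poly p c):] * p + (- ([:inverse (poly p c):] * synthetic_div p c)) * [:-c,1:] = 1"
  proof -
    have "[:inverse (poly p c):] * p + (- ([:inverse (poly p c):] * synthetic_div p c)) * [:-c,1:]
      = [:inverse (poly p c):] * (p - [:-c, 1:] * synthetic_div p c)" by (rule aux_ring)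
    also have "p - [:-c, 1:] * synthetic_div p c = [:poly p c:]" using e by (metis add_diff_cancel_left')
    finally show ?thesis using assms by simp
  qed
  thus ?thesis unfolding bez_def by blast
qed

lemma alg_ids:
  fixes al be a1 b1 W Z X A2 B2 :: "'b::comm_ring_1"
  assumes h1: "al^2 = (2+Z)*a1" and h2: "be^2 = (2-Z)*b1" and h3: "al*be = W*Wm" and h4: "a1 = 2 + X"
    and h5: "b1 = 2 - X" and h6: "W = b1*a1" and h7: "A2 = al + be" and h8: "B2 = al - be"
  shows "A2 * B2 = 4 * (Z + X)"
    "4 * (W * (Wm + 1)) = A2 * (4*be + b1*B2)"
    "4 * (W * (Wm - 1)) = B2 * (4*be - b1*A2)"
proof -
  have e1: "A2 * B2 = al^2 - be^2" unfolding h7 h8 by (simp add: power2_eq_square algebra_simps)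
  also have "\<dots> = (2+Z)*(2+X) - (2-Z)*(2-X)" unfolding h1 h2 h4 h5 ..
  also have "\<dots> = 4 * (Z + X)" by (simp add: algebra_simps)
  finally show AB: "A2 * B2 = 4 * (Z + X)" .
  have "A2 * (4*be + b1*B2) = 4*(al*be) + 4*be^2 + b1*(A2*B2)"
    unfolding h7 h8 by (simp add: power2_eq_square algebra_simps)
  also have "\<dots> = 4*(W*Wm) + 4*((2-Z)*b1) + b1*(4*(Z+X))" unfolding h3 h2 AB ..
  also have "\<dots> = 4 * (W * (Wm + 1))" unfolding h6 h4 by (simp add: algebra_simps)
  finally show "4 * (W * (Wm + 1)) = A2 * (4*be + b1*B2)" ..
  have "B2 * (4*be - b1*A2) = 4*(al*be) - 4*be^2 - b1*(A2*B2)"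
    unfolding h7 h8 by (simp add: power2_eq_square algebra_simps)
  also have "\<dots> = 4*(W*Wm) - 4*((2-Z)*b1) - b1*(4*(Z+X))" unfolding h3 h2 AB ..
  also have "\<dots> = 4 * (W * (Wm - 1))" unfolding h6 h4 by (simp add: algebra_simps)
  finally show "4 * (W * (Wm - 1)) = B2 * (4*be - b1*A2)" ..
qed

lemma core:
  assumes q: "odd CARD('a::{field,finite})"
  shows "2 * (\<Prod>u\<in>{u::'a. u^((CARD('a) - 1) div 2) = -1 \<and> (4-u)^((CARD('a) - 1) div 2) = -1}. x^2 - u)
         = (2+x)^((CARD('a) - 1) div 2 + 1) + (2-x)^((CARD('a) - 1) div 2 + 1)"
proof -
  define m where "m = (CARD('a) - 1) div 2"
  define k where "k = m + 1"
  obtain r where r: "CARD('a) = 2*r+1" using q oddE by blast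
  have qm: "CARD('a) = 2*m+1" unfolding m_def using r by simp
  have m1: "m \<ge> 1" unfolding m_def by (rule ff_m_ge1[OF q])
  have two: "(2::'a) \<noteq> 0" by (rule ff_two_nz[OF q])
  have k1: "k \<ge> 1" unfolding k_def by simp
  have four: "(4::'a) \<noteq> 0" using two by (metis mult_eq_0_iff numeral_Bit0_eq_double mult_2)
  have n1: "(1::'a) \<noteq> -1" by (rule one_neq_minus_one[OF q])
  define N where "N = {u::'a. u^m = -1}"
  define U where "U = {u::'a. u^m = -1 \<and> (4-u)^m = -1}"
  define V where "V = {u::'a. u^m = -1 \<and> (4-u)^m = 1}"
  have pm: "y \<noteq> 0 \<Longrightarrow> y ^ m = 1 \<or> y ^ m = -1" for y :: 'a
    unfolding m_def by (rule euler_pm[OF q])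
  have four_sq: "(4::'a)^m = 1"
    using euler_sq[OF q four] unfolding m_def[symmetric] by (metis power2_eq_square numeral_Bit0_eq_double mult_2 one_add_one)
  have NUV: "N = U \<union> V"
  proof -
    have "(4 - u)^m = 1 \<or> (4 - u)^m = -1" if "u^m = -1" for u :: 'a
    proof -
      have "u \<noteq> 4" using that four_sq n1 by auto
      thus ?thesis using pm[of "4-u"] by auto
    qed
    thus ?thesis unfolding N_def U_def V_def by auto
  qed
  have UV: "U \<inter> V = {}" unfolding U_def V_def using n1 by auto
  define PU where "PU = (\<Prod>u\<in>U. [:-u,1:] :: 'a poly)"
  define PV where "PV = (\<Prod>u\<in>V. [:-u,1:] :: 'a poly)"
  have PUV: "PU * PV = monom 1 m + 1"
  proof -
    have "PU * PV = (\<Prod>u\<in>N. [:-u,1:])" unfolding PU_def PV_def NUV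
      by (rule prod.union_disjoint[symmetric]) (use UV in auto)
    also have "\<dots> = monom 1 m + 1" unfolding N_def m_def by (rule P_N[OF q])
    finally show ?thesis .
  qed
  define X :: "'a poly" where "X = [:0,1:]"
  define sq where "sq = X^2"
  define Dx where "Dx = pcompose PU sq"
  define Dv where "Dv = pcompose PV sq"
  define W :: "'a poly" where "W = [:2,-1:] * [:2,1:]"
  define Z where "Z = X ^ CARD('a)"
  have pX: "pcompose X sq = sq" unfolding X_def by (simp add: pcompose_pCons)
  have pW: "pcompose [:4,-1:] sq = W"
    unfolding W_def sq_def X_def by (simp add: pcompose_pCons numeral_poly power2_eq_square algebra_simps)
  have DxDv: "X * (Dx * Dv) = Z + X"
  proof -
    have "Dx * Dv = pcompose (PU * PV) sq" unfolding Dx_def Dv_def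
      by (simp add: pcompose_mult)
    also have "\<dots> = pcompose (monom 1 m + 1) sq" by (simp add: PUV)
    also have "\<dots> = sq^m + 1" by (simp add: monom_altdef pcompose_add pcompose_power_left' pcompose_1 flip: X_def) (simp add: pX)
    finally show ?thesis unfolding Z_def qm sq_def by (simp add: algebra_simps power_mult[symmetric] power_Suc)
  qed
  have Dx_dvd: "Dx dvd W^m + 1"
  proof -
    have "PU dvd [:4,-1:]^m + 1" unfolding PU_def
      by (rule prod_lin_dvd) (auto simp: U_def)
    hence "Dx dvd pcompose ([:4,-1:]^m + 1) sq" unfolding Dx_def by (rule pcompose_dvd)
    thus ?thesis by (simp add: pcompose_add pcompose_power_left' pcompose_1 pW)
  qed
  have Dv_dvd: "Dv dvd W^m - 1"
  proof -
    have "PV dvd [:4,-1:]^m - 1" unfolding PV_def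
      by (rule prod_lin_dvd) (auto simp: V_def)
    hence "Dv dvd pcompose ([:4,-1:]^m - 1) sq" unfolding Dv_def by (rule pcompose_dvd)
    thus ?thesis by (simp add: pcompose_diff pcompose_power_left' pcompose_1 pW)
  qed
  define a1 :: "'a poly" where "a1 = [:2,1:]"
  define b1 :: "'a poly" where "b1 = [:2,-1:]"
  define al where "al = a1^k"
  define be where "be = b1^k"
  define A2 where "A2 = al + be"
  define B2 where "B2 = al - be"
  have a1X: "a1 = 2 + X" unfolding a1_def X_def by (simp add: numeral_poly)
  have b1X: "b1 = 2 - X" unfolding b1_def X_def by (simp add: numeral_poly)
  have mZ: "monom c CARD('a) = smult c Z" for c unfolding Z_def X_def by (rule monom_altdef)
  have c2: "[:2::'a:] = 2" by (simp add: numeral_poly)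
  have fa: "a1^CARD('a) = 2 + Z"
  proof -
    have "a1^CARD('a) = [:2:] + monom 1 CARD('a)" unfolding a1_def by (rule frob_lin)
    thus ?thesis by (simp only: mZ c2 smult_1_left)
  qed
  have fb: "b1^CARD('a) = 2 - Z"
  proof -
    have "b1^CARD('a) = [:2:] + monom (-1) CARD('a)" unfolding b1_def by (rule frob_lin)
    thus ?thesis by (simp only: mZ c2 smult_minus_left smult_1_left diff_conv_add_uminus)
  qed
  have k2: "2 * k = CARD('a) + 1" unfolding k_def qm by simp
  have h1: "al^2 = (2+Z)*a1"
  proof -
    have "al^2 = a1^(2*k)" unfolding al_def by (simp add: power_mult[symmetric] mult.commute)
    also have "\<dots> = a1^CARD('a) * a1" by (simp add: k2)
    finally show ?thesis by (simp add: fa)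
  qed
  have h2: "be^2 = (2-Z)*b1"
  proof -
    have "be^2 = b1^(2*k)" unfolding be_def by (simp add: power_mult[symmetric] mult.commute)
    also have "\<dots> = b1^CARD('a) * b1" by (simp add: k2)
    finally show ?thesis by (simp add: fb)
  qed
  have WX: "W = b1 * a1" unfolding W_def a1_def b1_def ..
  have h3: "al*be = W*W^m"
  proof -
    have "al*be = (b1*a1)^k" unfolding al_def be_def by (simp only: power_mult_distrib mult.commute)
    thus ?thesis unfolding k_def WX[symmetric] by simp
  qed
  note ids = alg_ids[OF h1 h2 h3 a1X b1X WX A2_def B2_def]
  have u4: "is_unit (4::'a poly)" using four by (simp add: numeral_poly is_unit_poly_iff dvd_field_iff)
  have pa1: "poly a1 y = 2 + y" for y unfolding a1_def by simp
  have pb1: "poly b1 y = 2 - y" for y unfolding b1_def by simp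
  have pA2: "poly A2 y = (2+y)^k + (2-y)^k" for y unfolding A2_def al_def be_def by (simp add: pa1 pb1)
  have "4 * (W * (W^m + 1)) = A2 * (4*be + b1*B2)" by (rule ids(2))
  hence A2d1: "A2 dvd W * (W^m + 1)" by (metis dvd_mult_unit_iff' dvd_triv_left u4)
  have "4 * (W * (W^m - 1)) = B2 * (4*be - b1*A2)" by (rule ids(3))
  hence B2d1: "B2 dvd W * (W^m - 1)" by (metis dvd_mult_unit_iff' dvd_triv_left u4)
  have k4: "(4::'a)^k \<noteq> 0" using four by simp
  have copA_a1: "bez A2 a1"
  proof -
    have "bez A2 [:-(-2),1:]" by (rule bez_lin) (use k1 k4 in \<open>simp add: pA2 power_0_left\<close>)
    thus ?thesis unfolding a1_def by simp
  qed
  have copA_b1: "bez A2 b1"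
  proof -
    have "bez A2 [:-2,1:]" by (rule bez_lin) (use k1 k4 in \<open>simp add: pA2 power_0_left\<close>)
    hence "bez A2 (- [:-2,1:])" by (rule bez_neg)
    moreover have "b1 = - [:-2,1:]" unfolding b1_def by simp
    ultimately show ?thesis by (simp only:)
  qed
  have copAW: "bez A2 W" unfolding WX by (rule bez_mult[OF copA_b1 copA_a1])
  have "A2 dvd (W^m + 1) * W" using A2d1 by (simp only: mult.commute)
  hence A2d: "A2 dvd W^m + 1" by (rule bez_dvd[OF copAW])
  have cop1: "bez (W^m + 1) (W^m - 1)"
  proof -
    define h :: "'a poly" where "h = [:inverse 2:]"
    have "h * (W^m + 1) + (- h) * (W^m - 1) = h * 2" by (simp add: algebra_simps)
    also have "\<dots> = [:inverse 2 * 2:]" unfolding h_def by (simp add: numeral_poly)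
    also have "\<dots> = 1" using two by simp
    finally show ?thesis unfolding bez_def by blast
  qed
  have cop2: "bez (W^m + 1) W"
  proof -
    have "W^m = W * W^(m-1)" using m1 by (simp add: power_eq_if)
    hence "1 * (W^m + 1) + (-(W^(m-1))) * W = 1" by (simp add: algebra_simps)
    thus ?thesis unfolding bez_def by blast
  qed
  have copB: "bez (W^m + 1) B2"
  proof -
    have "bez (W^m + 1) (W * (W^m - 1))" by (rule bez_mult[OF cop2 cop1])
    thus ?thesis using B2d1 by (rule bez_divisors[OF _ dvd_refl])
  qed
  have copAX: "bez A2 X"
  proof -
    have "(2::'a)^k + 2^k = 2 * 2^k" by (rule mult_2[symmetric])
    hence "(2::'a)^k + 2^k \<noteq> 0" using two by simp
    hence "bez A2 [:-0,1:]" by (intro bez_lin) (simp add: pA2)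
    thus ?thesis unfolding X_def by simp
  qed
  have copAV: "bez A2 Dv" by (rule bez_divisors[OF cop1 A2d Dv_dvd])
  have AB: "A2 * B2 = 4 * (X * (Dx * Dv))" using ids(1) DxDv by simp
  have AdD: "A2 dvd Dx"
  proof -
    have "A2 dvd 4 * (X * (Dx * Dv))" unfolding AB[symmetric] by simp
    hence "A2 dvd X * (Dx * Dv)" by (metis dvd_mult_unit_iff' u4)
    hence "A2 dvd (Dx * Dv) * X" by (simp only: mult.commute)
    hence "A2 dvd Dx * Dv" by (rule bez_dvd[OF copAX])
    thus ?thesis by (rule bez_dvd[OF copAV])
  qed
  have DdA: "Dx dvd A2"
  proof -
    have "Dx dvd A2 * B2" unfolding AB by simp
    moreover have "bez Dx B2" by (rule bez_divisors[OF copB Dx_dvd dvd_refl])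
    ultimately show ?thesis by (simp only: bez_dvd)
  qed
  have A2nz: "A2 \<noteq> 0"
  proof
    assume "A2 = 0"
    hence "poly A2 0 = 0" by simp
    moreover have "(2::'a)^k + 2^k = 2 * 2^k" by (rule mult_2[symmetric])
    ultimately show False using two by (simp add: pA2)
  qed
  obtain r where r: "A2 = Dx * r" using DdA by (auto simp: dvd_def)
  obtain t where t: "Dx = A2 * t" using AdD by (auto simp: dvd_def)
  have "A2 * (t * r) = A2 * 1" using r t by (simp add: mult.assoc)
  hence "t * r = 1" using A2nz mult_left_cancel by blast
  hence "is_unit r" by (metis dvdI mult.commute)
  then obtain c where c: "r = [:c:]" by (auto simp: is_unit_poly_iff)
  have lcD: "lead_coeff Dx = 1"
  proof -
    have "degree sq = 2" unfolding sq_def X_def by (simp add: degree_power_eq)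
    hence "lead_coeff Dx = lead_coeff PU * lead_coeff sq ^ degree PU" unfolding Dx_def
      by (intro lead_coeff_comp) simp
    moreover have "lead_coeff PU = 1" unfolding PU_def by (simp add: lead_coeff_prod)
    moreover have "lead_coeff sq = 1" unfolding sq_def X_def by (simp add: lead_coeff_power)
    ultimately show ?thesis by simp
  qed
  have "lead_coeff A2 = 2" unfolding A2_def al_def be_def a1_def b1_def k_def m_def by (rule lcA2[OF q])
  moreover have "lead_coeff A2 = c" unfolding r c using lcD by (simp add: lead_coeff_mult)
  ultimately have c2': "c = 2" by simp
  have "poly A2 x = poly Dx x * 2" unfolding r c c2' by simp
  moreover have "poly Dx x = (\<Prod>u\<in>U. x^2 - u)" unfolding Dx_def PU_def sq_def X_def
    by (simp add: poly_pcompose poly_prod)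
  ultimately show ?thesis unfolding U_def m_def[symmetric] k_def[symmetric] using pA2[of x] by (simp add: mult.commute)
qed

lemma B2_iff:
  assumes q: "odd CARD('a::{field,finite})" and "e1 = 1 \<or> e1 = -1" and "e2 = 1 \<or> e2 = -1"
  shows "(b::'a) \<in> B2 e1 e2 \<longleftrightarrow>
    (2-b)^((CARD('a) - 1) div 2) = of_int e1 \<and> (2+b)^((CARD('a) - 1) div 2) = of_int e2"
  unfolding B2_def using assms by (simp add: leg_eq_iff[OF q])

lemma Tform:
  assumes q: "odd CARD('a::{field,finite})"
  shows "2 * (\<Prod>a\<in>(B2 (-1) (-1) :: 'a set). y^2 - 2 - a)
     = (2+y)^((CARD('a) - 1) div 2 + 1) + (2-y)^((CARD('a) - 1) div 2 + 1)"
proof -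
  define m where "m = (CARD('a) - 1) div 2"
  have B: "(B2 (-1) (-1) :: 'a set) = {a. (2-a)^m = -1 \<and> (2+a)^m = -1}"
    using B2_iff[OF q, of "-1" "-1"] unfolding m_def by auto
  have "(\<Prod>a\<in>(B2 (-1) (-1) :: 'a set). y^2 - 2 - a) = (\<Prod>u\<in>{u::'a. u^m = -1 \<and> (4-u)^m = -1}. y^2 - u)"
    unfolding B
  proof (rule prod.reindex_bij_witness[where i="\<lambda>u. u - 2" and j="\<lambda>a. 2 + a"])
    fix a :: 'a assume "a \<in> {a. (2-a)^m = -1 \<and> (2+a)^m = -1}"
    thus "2 + a \<in> {u::'a. u^m = -1 \<and> (4-u)^m = -1}"
      by (simp add: algebra_simps)
  next
    fix u :: 'a assume "u \<in> {u::'a. u^m = -1 \<and> (4-u)^m = -1}"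
    thus "u - 2 \<in> {a. (2-a)^m = -1 \<and> (2+a)^m = -1}"
      by (simp add: algebra_simps)
  qed (simp_all add: algebra_simps)
  thus ?thesis using core[OF q, of y] unfolding m_def by simp
qed

theorem theorem7p2:
  fixes c :: "'a::{field,finite}"
  assumes "odd (card (UNIV :: 'a set))"
  defines "P \<equiv> (\<Prod>a\<in>(B2 (-1) (-1) :: 'a set). c - a)"
  shows "(c = 2 \<longrightarrow> P = 2)
    \<and> (c = -2 \<longrightarrow> P = of_int (legendreF (2::'a)) * 2)
    \<and> (c \<in> B2 (-1) 1 \<longrightarrow>
          (\<exists>s. s ^ 2 = c + 2 \<and> legendreF (s + 2) = 1) \<and>
          (\<forall>s. s ^ 2 = c + 2 \<and> legendreF (s + 2) = 1 \<longrightarrow> P = s))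
    \<and> (c \<in> B2 1 (-1) \<longrightarrow>
          (\<exists>s. s ^ 2 = 2 - c \<and> legendreF (s + 2) = -1) \<and>
          (\<forall>s. s ^ 2 = 2 - c \<and> legendreF (s + 2) = -1 \<longrightarrow>
                P = - (of_int (legendreF (2::'a)) * s)))
    \<and> (c \<in> B2 1 1 \<longrightarrow> (\<forall>s. s ^ 2 = c + 2 \<longrightarrow>
          (s \<in> B2 1 1 \<longrightarrow> P = 2) \<and> (s \<notin> B2 1 1 \<longrightarrow> P = -2)))
    \<and> (c \<in> B2 (-1) (-1) \<longrightarrow> P = 0)
    \<and> (c \<in> B2 1 1 \<longrightarrow> (\<exists>s. s ^ 2 = c + 2) \<and>
          (\<forall>s. s ^ 2 = c + 2 \<longrightarrow>
             (s \<in> B2 1 1 \<and> - s \<in> B2 1 1) \<or> (s \<in> B2 (-1) (-1) \<and> - s \<in> B2 (-1) (-1))))"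
proof -
  have q: "odd CARD('a)" using assms(1) by simp
  define m where "m = (CARD('a) - 1) div 2"
  define B where "B = (B2 (-1) (-1) :: 'a set)"
  define T where "T y = (\<Prod>a\<in>B. y - a)" for y :: 'a
  have PT: "P = T c" unfolding P_def T_def B_def ..
  have m1: "m \<ge> 1" unfolding m_def by (rule ff_m_ge1[OF q])
  have two: "(2::'a) \<noteq> 0" by (rule ff_two_nz[OF q])
  have n1: "(1::'a) \<noteq> -1" by (rule one_neq_minus_one[OF q])
  have c2: "\<And>u v::'a. 2 * u = 2 * v \<Longrightarrow> u = v" using two by simp
  have leg: "of_int (legendreF z) = z^m" for z :: 'a unfolding m_def by (rule leg_pow[OF q])
  have legi: "legendreF z = e \<longleftrightarrow> z^m = of_int e" if "e = 1 \<or> e = -1" for z :: 'a and e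
    using leg_eq_iff[OF q, of z e] that unfolding m_def by auto
  have Bi: "b \<in> B2 e1 e2 \<longleftrightarrow> (2-b)^m = of_int e1 \<and> (2+b)^m = of_int e2"
    if "e1 = 1 \<or> e1 = -1" "e2 = 1 \<or> e2 = -1" for b :: 'a and e1 e2
    using B2_iff[OF q that] unfolding m_def .
  have pm: "z \<noteq> 0 \<Longrightarrow> z^m = 1 \<or> z^m = -1" for z :: 'a unfolding m_def by (rule euler_pm[OF q])
  have z0: "(0::'a)^m = 0" using m1 by (simp add: power_0_left)
  have nz: "z^m = 1 \<or> z^m = -1 \<Longrightarrow> z \<noteq> 0" for z :: 'a using m1 n1 by (auto simp: power_0_left)
  have Tf: "2 * T (y^2 - 2) = (2+y)*(2+y)^m + (2-y)*(2-y)^m" for y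
    using Tform[OF q, of y] unfolding T_def B_def m_def[symmetric] by (simp add: algebra_simps)
  have Bsym: "-a \<in> B \<longleftrightarrow> a \<in> B" for a unfolding B_def B2_def by (auto simp: algebra_simps)
  have Tsym: "T (-y) = (-1)^card B * T y" for y
  proof -
    have "T (-y) = (\<Prod>a\<in>B. (-1) * (y - a))" unfolding T_def
      by (rule prod.reindex_bij_witness[where i=uminus and j=uminus]) (auto simp: Bsym algebra_simps)
    also have "\<dots> = (-1)^card B * T y" unfolding T_def by (simp only: prod.distrib prod_constant)
    finally show ?thesis .
  qed
  have four1: "(4::'a)^m = 1"
  proof -
    have "(4::'a) = 2 * 2" by simp
    hence f: "(4::'a) \<noteq> 0" using two by (metis mult_eq_0_iff)
    have ex: "\<exists>y::'a. y^2 = 4" by (rule exI[of _ 2]) (simp add: power2_eq_square)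
    have "legendreF (4::'a) = 1" unfolding legendreF_def using f ex by simp
    thus ?thesis using leg[of 4] by simp
  qed
  have K: "(2+s)^m * (2-s)^m = (4 - s^2)^m" for s :: 'a
    by (simp add: power_mult_distrib[symmetric] power2_eq_square algebra_simps)
  have T2: "T 2 = 2"
  proof -
    have "2 * T (2^2 - 2) = 4 * 4^m + 0 * 0^m" using Tf[of 2] by simp
    hence "2 * T 2 = 2 * 2" using four1 by simp
    thus ?thesis by (rule c2)
  qed
  have Tm2: "T (-2) = 2 * 2^m"
  proof -
    have "2 * T (0^2 - 2) = 2 * 2^m + 2 * 2^m" using Tf[of 0] by simp
    hence "2 * T (-2) = 2 * (2 * 2^m)" by simp
    thus ?thesis by (rule c2)
  qed
  have sgn: "(-1)^card B = (2::'a)^m"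
  proof -
    have "2 * 2^m = (-1)^card B * (2::'a)" using Tsym[of 2] T2 Tm2 by simp
    hence "2 * 2^m = 2 * ((-1)^card B :: 'a)" by (simp add: mult.commute)
    hence "2^m = ((-1)^card B :: 'a)" by (rule c2)
    thus ?thesis by simp
  qed
  have C1: "c = 2 \<longrightarrow> P = 2" using T2 PT by simp
  have C2: "c = -2 \<longrightarrow> P = of_int (legendreF (2::'a)) * 2" using Tm2 PT leg[of 2] by (simp add: mult.commute)
  have C3: "c \<in> B2 (-1) 1 \<longrightarrow>
          (\<exists>s. s ^ 2 = c + 2 \<and> legendreF (s + 2) = 1) \<and>
          (\<forall>s. s ^ 2 = c + 2 \<and> legendreF (s + 2) = 1 \<longrightarrow> P = s)"
  proof
    assume "c \<in> B2 (-1) 1"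
    hence cm: "(2-c)^m = -1" "(2+c)^m = 1" using Bi[of "-1" 1 c] by auto
    have Ks: "(2+s)^m * (2-s)^m = -1" if "s^2 = c + 2" for s
      using K[of s] that cm by (simp add: algebra_simps)
    show "(\<exists>s. s ^ 2 = c + 2 \<and> legendreF (s + 2) = 1) \<and>
          (\<forall>s. s ^ 2 = c + 2 \<and> legendreF (s + 2) = 1 \<longrightarrow> P = s)"
    proof
      have "2 + c \<noteq> 0" using nz[of "2+c"] cm by simp
      hence "legendreF (2+c) = 1" using cm legi[of 1 "2+c"] by simp
      then obtain y where y: "y^2 = c + 2" unfolding legendreF_def by (auto split: if_splits simp: add.commute)
      have ky: "(2+y)^m * (2-y)^m = -1" by (rule Ks[OF y])
      have "2 + y \<noteq> 0" "2 - y \<noteq> 0" using ky m1 by (auto simp: power_0_left)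
      hence "(2+y)^m = 1 \<or> (2+y)^m = -1" "(2-y)^m = 1 \<or> (2-y)^m = -1" using pm by auto
      thus "\<exists>s. s ^ 2 = c + 2 \<and> legendreF (s + 2) = 1"
      proof (cases "(2+y)^m = 1")
        case True thus ?thesis using y legi[of 1 "y+2"] by (auto simp: add.commute)
      next
        case False
        hence a: "(2+y)^m = -1" using \<open>(2+y)^m = 1 \<or> (2+y)^m = -1\<close> by simp
        have "(2-y)^m = 1"
        proof (rule ccontr)
          assume "(2-y)^m \<noteq> 1"
          hence "(2-y)^m = -1" using \<open>(2-y)^m = 1 \<or> (2-y)^m = -1\<close> by simp
          hence "(2+y)^m * (2-y)^m = 1" using a by simp
          thus False using ky n1 by simp
        qed
        hence "legendreF (-y+2) = 1" using legi[of 1 "-y+2"] by (simp add: algebra_simps)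
        thus ?thesis using y by (intro exI[of _ "-y"]) simp
      qed
      show "\<forall>s. s ^ 2 = c + 2 \<and> legendreF (s + 2) = 1 \<longrightarrow> P = s"
      proof (intro allI impI, elim conjE)
        fix s assume s: "s^2 = c + 2" "legendreF (s+2) = 1"
        have sp: "(2+s)^m = 1" using s(2) legi[of 1 "s+2"] by (simp add: add.commute)
        hence sm: "(2-s)^m = -1" using Ks[OF s(1)] by simp
        have cs: "c = s^2 - 2" using s(1) by simp
        have "2 * T c = 2 * s" unfolding cs using Tf[of s] sp sm by (simp add: algebra_simps)
        hence "T c = s" by (rule c2)
        thus "P = s" using PT by simp
      qed
    qed
  qed
  have C4: "c \<in> B2 1 (-1) \<longrightarrow>
          (\<exists>s. s ^ 2 = 2 - c \<and> legendreF (s + 2) = -1) \<and>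
          (\<forall>s. s ^ 2 = 2 - c \<and> legendreF (s + 2) = -1 \<longrightarrow>
                P = - (of_int (legendreF (2::'a)) * s))"
  proof
    assume "c \<in> B2 1 (-1)"
    hence cm: "(2-c)^m = 1" "(2+c)^m = -1" using Bi[of 1 "-1" c] by auto
    have Ks: "(2+s)^m * (2-s)^m = -1" if "s^2 = 2 - c" for s
      using K[of s] that cm by (simp add: algebra_simps)
    show "(\<exists>s. s ^ 2 = 2 - c \<and> legendreF (s + 2) = -1) \<and>
          (\<forall>s. s ^ 2 = 2 - c \<and> legendreF (s + 2) = -1 \<longrightarrow>
                P = - (of_int (legendreF (2::'a)) * s))"
    proof
      have "2 - c \<noteq> 0" using nz[of "2-c"] cm by simp
      hence "legendreF (2-c) = 1" using cm legi[of 1 "2-c"] by simp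
      then obtain y where y: "y^2 = 2 - c" unfolding legendreF_def by (auto split: if_splits)
      have ky: "(2+y)^m * (2-y)^m = -1" by (rule Ks[OF y])
      have "2 + y \<noteq> 0" "2 - y \<noteq> 0" using ky m1 by (auto simp: power_0_left)
      hence "(2+y)^m = 1 \<or> (2+y)^m = -1" "(2-y)^m = 1 \<or> (2-y)^m = -1" using pm by auto
      thus "\<exists>s. s ^ 2 = 2 - c \<and> legendreF (s + 2) = -1"
      proof (cases "(2+y)^m = -1")
        case True thus ?thesis using y legi[of "-1" "y+2"] by (auto simp: add.commute)
      next
        case False
        hence a: "(2+y)^m = 1" using \<open>(2+y)^m = 1 \<or> (2+y)^m = -1\<close> by simp
        have "(2-y)^m = -1"
        proof (rule ccontr)
          assume "(2-y)^m \<noteq> -1"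
          hence "(2-y)^m = 1" using \<open>(2-y)^m = 1 \<or> (2-y)^m = -1\<close> by simp
          hence "(2+y)^m * (2-y)^m = 1" using a by simp
          thus False using ky n1 by simp
        qed
        hence "legendreF (-y+2) = -1" using legi[of "-1" "-y+2"] by (simp add: algebra_simps)
        thus ?thesis using y by (intro exI[of _ "-y"]) simp
      qed
      show "\<forall>s. s ^ 2 = 2 - c \<and> legendreF (s + 2) = -1 \<longrightarrow> P = - (of_int (legendreF (2::'a)) * s)"
      proof (intro allI impI, elim conjE)
        fix s assume s: "s^2 = 2 - c" "legendreF (s+2) = -1"
        have sp: "(2+s)^m = -1" using s(2) legi[of "-1" "s+2"] by (simp add: add.commute)
        hence sm: "(2-s)^m = 1" using Ks[OF s(1)] by simp
        have cs: "-c = s^2 - 2" using s(1) by simp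
        have "2 * T (-c) = (2+s)*(-1) + (2-s)*1" unfolding cs using Tf[of s] sp sm by simp
        also have "\<dots> = 2 * (-s)" by (simp add: algebra_simps)
        finally have "2 * T (-c) = 2 * (-s)" .
        hence Tmc: "T (-c) = -s" by (rule c2)
        have "T (-c) = (-1)^card B * T c" by (rule Tsym)
        hence "(-1)^card B * T (-c) = ((-1)^card B * (-1)^card B) * T c" by simp
        also have "(-1)^card B * (-1)^card B = (1::'a)" by (simp flip: power_add add: power_minus1_even)
        finally have "T c = (-1)^card B * (-s)" using Tmc by simp
        thus "P = - (of_int (legendreF (2::'a)) * s)" using PT sgn leg[of 2] by simp
      qed
    qed
  qed
  have C5: "c \<in> B2 1 1 \<longrightarrow> (\<forall>s. s ^ 2 = c + 2 \<longrightarrow>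
          (s \<in> B2 1 1 \<longrightarrow> P = 2) \<and> (s \<notin> B2 1 1 \<longrightarrow> P = -2)) \<and>
          (\<exists>s. s ^ 2 = c + 2) \<and>
          (\<forall>s. s ^ 2 = c + 2 \<longrightarrow>
             (s \<in> B2 1 1 \<and> - s \<in> B2 1 1) \<or> (s \<in> B2 (-1) (-1) \<and> - s \<in> B2 (-1) (-1)))"
  proof
    assume "c \<in> B2 1 1"
    hence cm: "(2-c)^m = 1" "(2+c)^m = 1" using Bi[of 1 1 c] by auto
    have Ks: "(2+s)^m * (2-s)^m = 1" if "s^2 = c + 2" for s
      using K[of s] that cm by (simp add: algebra_simps)
    have eq: "((2+s)^m = 1 \<and> (2-s)^m = 1) \<or> ((2+s)^m = -1 \<and> (2-s)^m = -1)" if "s^2 = c + 2" for s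
    proof -
      have ks: "(2+s)^m * (2-s)^m = 1" by (rule Ks[OF that])
      hence "2 + s \<noteq> 0" "2 - s \<noteq> 0" using m1 by (auto simp: power_0_left)
      hence "(2+s)^m = 1 \<or> (2+s)^m = -1" "(2-s)^m = 1 \<or> (2-s)^m = -1" using pm by auto
      thus ?thesis using ks n1 by auto
    qed
    have B11: "s \<in> B2 1 1 \<longleftrightarrow> (2-s)^m = 1 \<and> (2+s)^m = 1" for s :: 'a using Bi[of 1 1 s] by simp
    have Bmm: "s \<in> B2 (-1) (-1) \<longleftrightarrow> (2-s)^m = -1 \<and> (2+s)^m = -1" for s :: 'a using Bi[of "-1" "-1" s] by simp
    show "(\<forall>s. s ^ 2 = c + 2 \<longrightarrow>
          (s \<in> B2 1 1 \<longrightarrow> P = 2) \<and> (s \<notin> B2 1 1 \<longrightarrow> P = -2)) \<and>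
          (\<exists>s. s ^ 2 = c + 2) \<and>
          (\<forall>s. s ^ 2 = c + 2 \<longrightarrow>
             (s \<in> B2 1 1 \<and> - s \<in> B2 1 1) \<or> (s \<in> B2 (-1) (-1) \<and> - s \<in> B2 (-1) (-1)))"
    proof (intro conjI allI impI)
      fix s assume s: "s^2 = c + 2" "s \<in> B2 1 1"
      hence sp: "(2+s)^m = 1" "(2-s)^m = 1" using B11 by auto
      have cs: "c = s^2 - 2" using s(1) by simp
      have "2 * T c = 2 * 2" unfolding cs using Tf[of s] sp by (simp add: algebra_simps)
      hence "T c = 2" by (rule c2)
      thus "P = 2" using PT by simp
    next
      fix s assume s: "s^2 = c + 2" "s \<notin> B2 1 1"
      hence sp: "(2+s)^m = -1" "(2-s)^m = -1" using B11 eq[OF s(1)] by auto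
      have cs: "c = s^2 - 2" using s(1) by simp
      have "2 * T c = (2+s)*(-1) + (2-s)*(-1)" unfolding cs using Tf[of s] sp by simp
      also have "\<dots> = 2 * (-2)" by (simp add: algebra_simps)
      finally have "2 * T c = 2 * (-2)" .
      hence "T c = -2" by (rule c2)
      thus "P = -2" using PT by simp
    next
      have "2 + c \<noteq> 0" using nz[of "2+c"] cm by simp
      hence "legendreF (2+c) = 1" using cm legi[of 1 "2+c"] by simp
      thus "\<exists>s. s ^ 2 = c + 2" unfolding legendreF_def by (auto split: if_splits simp: add.commute)
    next
      fix s assume s: "s^2 = c + 2"
      show "(s \<in> B2 1 1 \<and> - s \<in> B2 1 1) \<or> (s \<in> B2 (-1) (-1) \<and> - s \<in> B2 (-1) (-1))"
        using eq[OF s] unfolding B11 Bmm by (auto simp: algebra_simps)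
    qed
  qed
  have C6: "c \<in> B2 (-1) (-1) \<longrightarrow> P = 0"
  proof
    assume "c \<in> B2 (-1) (-1)"
    hence "c \<in> B" unfolding B_def .
    thus "P = 0" unfolding PT T_def by (auto intro: prod_zero simp: B_def)
  qed
  show ?thesis using C1 C2 C3 C4 C5 C6 by blast
qed

end
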